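(* There is an absolute constant $C>0$ such that the following holds. Let $0<\delta\le\frac14$, $0<a<\pi$, $\lambda\ge1$ and $M\ge1$. Let $g$ be a continuous function on the closed unit disk, analytic on its interior, satisfying $|g(\delta)|\ge1$ and, for every $0<\gamma\le1$, $|z|\le1-\gamma\Rightarrow|g(z)|\le\frac{\lambda M}{\gamma}$. Let $\Gamma$ be the circle with center $\delta$ and radius $1-\delta$, and let $J$ be the closed arc of $\Gamma$ with midpoint $1$ and arc length $a$. Then $$\max_{z\in J}|g(z)|\ge\left(\frac{\delta}{\lambda M}\right)^{C/a}.$$
   Context: The paper writes the bound as $(\delta/(\lambda M))^{O(1/a)}$, where $O(\cdot)$ hides an absolute constant. *)

theory Defs
  imports "HOL-Analysis.Analysis"
begin

text \<open>The closed arc of the circle with centre delta and radius 1 - delta, with midpoint 1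
  and arc length a: the points delta + (1 - delta) e^{i theta} with
  |theta| * (1 - delta) <= a / 2.\<close>
definition arcJ :: "real \<Rightarrow> real \<Rightarrow> complex set" where
  "arcJ \<delta> a = {complex_of_real \<delta> + complex_of_real (1 - \<delta>) * cis \<theta> | \<theta>.
                  \<bar>\<theta>\<bar> \<le> a / (2 * (1 - \<delta>))}"

end

theory Submission
  imports Defs "HOL-Complex_Analysis.Complex_Analysis"
begin

lemma key_ineq:
  fixes d r :: real and w :: complex
  assumes "0 < d" "0 < r" "d + r = 1" "norm w \<le> 1"
  shows "1 - (norm (of_real d + of_real r * w))^2 \<ge> d * r * (norm (1 - w))^2"
proof -
  obtain x y where w: "w = Complex x y" by (cases w)
  have n1: "(norm (of_real d + of_real r * w))^2 = (d + r*x)^2 + (r*y)^2"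
    using w by (simp add: cmod_def power2_eq_square)
  have n2: "(norm (1 - w))^2 = (1-x)^2 + y^2"
    using w by (simp add: cmod_def power2_eq_square)
  have n3: "x^2 + y^2 \<le> 1"
  proof -
    have "(norm w)^2 \<le> 1" using assms(4) by (metis abs_norm_cancel abs_square_le_1)
    then show ?thesis using w by (simp add: cmod_def)
  qed
  have "1 - ((d + r*x)^2 + (r*y)^2) - d * r * ((1-x)^2 + y^2) = r * (1 - (x^2+y^2))"
  proof -
    have dd: "d = 1 - r" using assms(3) by simp
    show ?thesis unfolding dd by (simp add: algebra_simps power2_eq_square)
  qed
  moreover have "r * (1 - (x^2+y^2)) \<ge> 0" using assms(2) n3 by simp
  ultimately show ?thesis unfolding n1 n2 by linarith
qed

lemma F_bound:
  fixes d r L :: real and g :: "complex \<Rightarrow> complex" and w :: complex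
  assumes d: "0 < d" "d \<le> 1/4" and r: "r = 1 - d" and L: "L > 0"
    and hyp: "\<forall>(\<gamma>::real) (z::complex). 0 < \<gamma> \<and> \<gamma> \<le> 1 \<and> norm z \<le> 1 - \<gamma> \<longrightarrow> norm (g z) \<le> L / \<gamma>"
    and w: "norm w \<le> 1"
  shows "norm (g (of_real d + of_real r * w) * (1 - w)^2) \<le> 2 * L / (d * r)"
proof (cases "w = 1")
  case True
  then show ?thesis using d r L by simp
next
  case False
  define z where "z = of_real d + of_real r * w"
  have r0: "r > 0" using d r by simp
  have K: "1 - (norm z)^2 \<ge> d * r * (norm (1 - w))^2"
    unfolding z_def by (rule key_ineq) (use d r w in auto)
  have pw: "norm (1 - w) > 0" using False by simp
  have pos: "d * r * (norm (1 - w))^2 > 0" using d r0 pw by simp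
  have z1: "norm z < 1"
  proof (rule ccontr)
    assume "\<not> norm z < 1"
    then have "(norm z)^2 \<ge> 1" by (simp add: one_le_power)
    then show False using K pos by linarith
  qed
  define \<gamma> where "\<gamma> = 1 - norm z"
  have g0: "0 < \<gamma>" "\<gamma> \<le> 1" using z1 unfolding \<gamma>_def by auto
  have "1 - (norm z)^2 = \<gamma> * (1 + norm z)" unfolding \<gamma>_def by (simp add: algebra_simps power2_eq_square)
  also have "\<dots> \<le> \<gamma> * 2" by (rule mult_left_mono) (use g0 z1 in auto)
  finally have gK: "d * r * (norm (1 - w))^2 \<le> 2 * \<gamma>" using K by linarith
  have gb: "norm (g z) \<le> L / \<gamma>" using hyp g0 unfolding \<gamma>_def by auto
  have "norm (g z * (1 - w)^2) = norm (g z) * (norm (1 - w))^2" by (simp add: norm_mult norm_power)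
  also have "\<dots> \<le> (L / \<gamma>) * (norm (1 - w))^2" using gb by (intro mult_right_mono) auto
  also have "\<dots> \<le> 2 * L / (d * r)"
  proof -
    have "(L / \<gamma>) * (norm (1 - w))^2 * (d * r) = L * (d * r * (norm (1 - w))^2) / \<gamma>" by simp
    also have "\<dots> \<le> L * (2 * \<gamma>) / \<gamma>" using gK L g0 by (intro divide_right_mono mult_left_mono) auto
    also have "\<dots> = 2 * L" using g0 by simp
    finally have "(L / \<gamma>) * (norm (1 - w))^2 * (d * r) \<le> 2 * L" .
    then show ?thesis using d r0 by (simp add: pos_le_divide_eq)
  qed
  finally show ?thesis unfolding z_def .
qed

lemma arc_cover:
  fixes n :: nat and w :: complex
  assumes n: "n > 0" and w: "norm w = 1"
  shows "\<exists>k<n. \<exists>\<theta>. \<bar>\<theta>\<bar> \<le> pi / n \<and> cis (2 * pi * k / n) * w = cis \<theta>"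
proof -
  define \<phi> where "\<phi> = Arg w"
  have w0: "w \<noteq> 0" using w by auto
  have wc: "w = cis \<phi>" using cis_Arg[OF w0] w unfolding \<phi>_def by (simp add: sgn_div_norm)
  define j where "j = floor (- \<phi> * n / (2 * pi) + 1/2)"
  define \<theta> where "\<theta> = \<phi> + 2 * pi * j / n"
  have np: "real n > 0" using n by simp
  have j1: "j \<le> - \<phi> * n / (2 * pi) + 1/2" and j2: "- \<phi> * n / (2 * pi) + 1/2 < j + 1"
    unfolding j_def by linarith+
  have "2 * pi * j / n \<le> - \<phi> + pi / n"
  proof -
    have "2 * pi * j \<le> 2 * pi * (- \<phi> * n / (2 * pi) + 1/2)" using j1 by (intro mult_left_mono) auto
    also have "\<dots> = (- \<phi> + pi / n) * n" using np by (simp add: field_simps)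
    finally show ?thesis using np by (simp add: divide_le_eq)
  qed
  moreover have "2 * pi * j / n \<ge> - \<phi> - pi / n"
  proof -
    have "2 * pi * (- \<phi> * n / (2 * pi) + 1/2) \<le> 2 * pi * (j + 1)" using j2 by (intro mult_left_mono) auto
    moreover have "2 * pi * (- \<phi> * n / (2 * pi) + 1/2) = (- \<phi> - pi / n) * n + 2 * pi" using np by (simp add: field_simps)
    ultimately have "(- \<phi> - pi / n) * n \<le> 2 * pi * j" by (simp add: algebra_simps)
    then show ?thesis using np by (simp add: le_divide_eq)
  qed
  ultimately have th: "\<bar>\<theta>\<bar> \<le> pi / n" unfolding \<theta>_def by linarith
  define k where "k = nat (j mod int n)"
  have kn: "k < n" unfolding k_def using n by (simp add: nat_less_iff)
  have jk: "j = int n * (j div int n) + int k" unfolding k_def using n by simp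
  have "2 * pi * j / n = 2 * pi * k / n + 2 * pi * of_int (j div int n)"
  proof -
    have "real_of_int j = real n * of_int (j div int n) + real k" using arg_cong[OF jk, of real_of_int] by simp
    then show ?thesis using np by (simp add: field_simps)
  qed
  then have "cis (2 * pi * j / n) = cis (2 * pi * k / n + 2 * pi * of_int (j div int n))"
    by simp
  also have "\<dots> = cis (2 * pi * k / n) * cis (2 * pi * of_int (j div int n))"
    by (rule cis_mult[symmetric])
  also have "cis (2 * pi * of_int (j div int n)) = 1" by (rule cis_multiple_2pi) simp
  finally have eq: "cis (2 * pi * j / n) = cis (2 * pi * k / n)" by simp
  have "cis \<theta> = cis \<phi> * cis (2 * pi * j / n)" unfolding \<theta>_def by (simp add: cis_mult)
  then have "cis (2 * pi * k / n) * w = cis \<theta>" unfolding eq wc by simp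
  then show ?thesis using kn th by blast
qed

lemma final_arith:
  fixes d L a r :: real and n :: nat
  assumes d: "0 < d" "d \<le> 1/4" and r: "r = 1 - d" and L: "L \<ge> 1"
    and a: "0 < a" "a < pi" and n: "n \<ge> 1" "real n \<le> 2 * pi / a + 1"
  shows "4 * ((d / L) powr (7 * pi / a)) * (2 * L / (d * r)) ^ (n - 1) < 1"
proof -
  define t where "t = L / d"
  have t4: "t \<ge> 4"
  proof -
    have "4 * d \<le> 1" using d by simp
    also have "1 \<le> L" using L .
    finally show ?thesis unfolding t_def using d by (simp add: le_divide_eq mult.commute)
  qed
  have r34: "r \<ge> 3/4" "r > 0" using d r by auto
  have B: "2 * L / (d * r) \<le> t^2"
  proof -
    have "2 * L / (d * r) = t * (2 / r)" unfolding t_def by simp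
    also have "\<dots> \<le> t * t"
    proof (rule mult_left_mono)
      have "2 / r \<le> 2 / (3/4)" using r34 by (intro divide_left_mono) auto
      then show "2 / r \<le> t" using t4 by simp
    qed (use t4 in auto)
    finally show ?thesis by (simp add: power2_eq_square)
  qed
  have Bpos: "0 \<le> 2 * L / (d * r)" using d r34 L by simp
  have "4 * (2 * L / (d * r)) ^ (n - 1) \<le> t * (t^2) ^ (n - 1)"
    using t4 B Bpos by (intro mult_mono power_mono) auto
  also have "\<dots> = t ^ (2 * n - 1)"
  proof -
    obtain m where m: "n = Suc m" using n by (cases n) auto
    have "t * (t^2) ^ m = t ^ (Suc (2 * m))" by (simp add: power_mult)
    then show ?thesis using m by simp
  qed
  also have "\<dots> \<le> t ^ (2 * n)" using t4 by (intro power_increasing) auto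
  also have "\<dots> = t powr (real (2 * n))" using t4 powr_realpow[of t "2 * n"] by simp
  also have "\<dots> \<le> t powr (6 * pi / a)"
  proof (rule powr_mono)
    have "1 < pi / a" using a by simp
    then have "2 * (2 * pi / a + 1) \<le> 6 * pi / a" by simp
    then show "real (2 * n) \<le> 6 * pi / a" using n by simp
  qed (use t4 in auto)
  finally have X: "4 * (2 * L / (d * r)) ^ (n - 1) \<le> t powr (6 * pi / a)" .
  have eta: "(d / L) powr (7 * pi / a) = t powr (- (7 * pi / a))"
    unfolding t_def using d L by (simp add: powr_divide powr_minus_divide)
  have "4 * ((d / L) powr (7 * pi / a)) * (2 * L / (d * r)) ^ (n - 1)
      = (d / L) powr (7 * pi / a) * (4 * (2 * L / (d * r)) ^ (n - 1))" by simp
  also have "\<dots> \<le> t powr (- (7 * pi / a)) * t powr (6 * pi / a)"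
    unfolding eta by (intro mult_left_mono X) auto
  also have "\<dots> = t powr (- (pi / a))" by (simp add: powr_add[symmetric])
  also have "\<dots> < 1" using t4 a by (intro powr_less_one) auto
  finally show ?thesis .
qed

theorem theorem5p5:
  shows "\<exists>C>0. \<forall>(\<delta>::real) (a::real) (lam::real) (M::real) (g::complex \<Rightarrow> complex).
    0 < \<delta> \<and> \<delta> \<le> 1/4 \<and> 0 < a \<and> a < pi \<and> lam \<ge> 1 \<and> M \<ge> 1 \<and>
    continuous_on (cball 0 1) g \<and> g holomorphic_on ball 0 1 \<and>
    norm (g (complex_of_real \<delta>)) \<ge> 1 \<and>
    (\<forall>(\<gamma>::real) (z::complex). 0 < \<gamma> \<and> \<gamma> \<le> 1 \<and> norm z \<le> 1 - \<gamma> \<longrightarrow> norm (g z) \<le> lam * M / \<gamma>)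
    \<longrightarrow> (\<exists>z\<in>arcJ \<delta> a. norm (g z) \<ge> (\<delta> / (lam * M)) powr (C / a))"
proof (rule exI[of _ "7 * pi"], intro conjI allI impI)
  show "7 * pi > (0::real)" by simp
  fix \<delta> a lam M :: real and g :: "complex \<Rightarrow> complex"
  assume A: "0 < \<delta> \<and> \<delta> \<le> 1/4 \<and> 0 < a \<and> a < pi \<and> lam \<ge> 1 \<and> M \<ge> 1 \<and>
    continuous_on (cball 0 1) g \<and> g holomorphic_on ball 0 1 \<and>
    norm (g (complex_of_real \<delta>)) \<ge> 1 \<and>
    (\<forall>(\<gamma>::real) (z::complex). 0 < \<gamma> \<and> \<gamma> \<le> 1 \<and> norm z \<le> 1 - \<gamma> \<longrightarrow> norm (g z) \<le> lam * M / \<gamma>)"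
  have d: "0 < \<delta>" "\<delta> \<le> 1/4" and a: "0 < a" "a < pi" and lm: "lam \<ge> 1" "M \<ge> 1"
    and gc: "continuous_on (cball 0 1) g" and gh: "g holomorphic_on ball 0 1"
    and g0: "norm (g (complex_of_real \<delta>)) \<ge> 1"
    and hyp: "\<forall>(\<gamma>::real) (z::complex). 0 < \<gamma> \<and> \<gamma> \<le> 1 \<and> norm z \<le> 1 - \<gamma> \<longrightarrow> norm (g z) \<le> lam * M / \<gamma>"
    using A by auto
  have L1: "lam * M \<ge> 1" using lm by (metis mult_mono' mult_1 zero_le_one) 
  define \<eta> where "\<eta> = (\<delta> / (lam * M)) powr (7 * pi / a)"
  have eta0: "\<eta> \<ge> 0" unfolding \<eta>_def by simp
  define B where "B = 2 * (lam * M) / (\<delta> * (1 - \<delta>))"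
  show "\<exists>z\<in>arcJ \<delta> a. norm (g z) \<ge> (\<delta> / (lam * M)) powr (7 * pi / a)"
  proof (rule ccontr)
    assume "\<not> (\<exists>z\<in>arcJ \<delta> a. norm (g z) \<ge> (\<delta> / (lam * M)) powr (7 * pi / a))"
    then have small: "\<And>z. z \<in> arcJ \<delta> a \<Longrightarrow> norm (g z) < \<eta>" unfolding \<eta>_def by (auto simp: not_le)
    define n where "n = nat \<lceil>2 * pi / a\<rceil>"
    have n1: "real n \<ge> 2 * pi / a" unfolding n_def by linarith
    have n2: "real n \<le> 2 * pi / a + 1"
    proof -
      have pa: "2 * pi / a > 0" using a by simp
      then have "real n = of_int \<lceil>2 * pi / a\<rceil>" unfolding n_def by simp
      also have "\<dots> \<le> 2 * pi / a + 1" by linarith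
      finally show ?thesis .
    qed
    have n0: "n \<ge> 1" using n1 a by (metis less_one not_le of_nat_0 divide_pos_pos mult_pos_pos pi_gt_zero zero_less_numeral)
    define F where "F w = g (of_real \<delta> + of_real (1 - \<delta>) * w) * (1 - w)^2" for w
    define H where "H w = (\<Prod>k<n. F (cis (2 * pi * k / n) * w))" for w
    have nr1: "norm (1 - complex_of_real \<delta>) = 1 - \<delta>"
    proof -
      have "1 - complex_of_real \<delta> = of_real (1 - \<delta>)" by simp
      then show ?thesis using d by (simp only: norm_of_real)
    qed
    have mapc: "norm (of_real \<delta> + of_real (1 - \<delta>) * (c * w)) \<le> 1" if "norm c = 1" "norm w \<le> 1" for c w :: complex
    proof -
      have "norm (of_real \<delta> + of_real (1 - \<delta>) * (c * w)) \<le> norm (of_real \<delta> :: complex) + norm (of_real (1 - \<delta>) * (c * w))"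
        by (rule norm_triangle_ineq)
      also have "\<dots> = \<delta> + (1 - \<delta>) * norm w" using d that by (simp add: norm_mult nr1)
      also have "\<dots> \<le> \<delta> + (1 - \<delta>) * 1" using d that by (intro add_left_mono mult_left_mono) auto
      finally show ?thesis by simp
    qed
    have mapb: "norm (of_real \<delta> + of_real (1 - \<delta>) * (c * w)) < 1" if "norm c = 1" "norm w < 1" for c w :: complex
    proof -
      have "norm (of_real \<delta> + of_real (1 - \<delta>) * (c * w)) \<le> norm (of_real \<delta> :: complex) + norm (of_real (1 - \<delta>) * (c * w))"
        by (rule norm_triangle_ineq)
      also have "\<dots> = \<delta> + (1 - \<delta>) * norm w" using d that by (simp add: norm_mult nr1)
      also have "\<dots> < \<delta> + (1 - \<delta>) * 1" using d that by (intro add_strict_left_mono mult_strict_left_mono) auto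
      finally show ?thesis by simp
    qed
    have Fh: "(\<lambda>w. F (c * w)) holomorphic_on ball 0 1" if c: "norm c = 1" for c
    proof -
      have "((\<lambda>w. g w) \<circ> (\<lambda>w. of_real \<delta> + of_real (1 - \<delta>) * (c * w))) holomorphic_on ball 0 1"
        by (rule holomorphic_on_compose_gen[OF _ gh]) (use mapb[OF c] in \<open>auto intro!: holomorphic_intros\<close>)
      then have "(\<lambda>w. g (of_real \<delta> + of_real (1 - \<delta>) * (c * w))) holomorphic_on ball 0 1" by (simp add: o_def)
      then show ?thesis unfolding F_def by (intro holomorphic_intros)
    qed
    have Fc: "continuous_on (cball 0 1) (\<lambda>w. F (c * w))" if c: "norm c = 1" for c
    proof -
      have "continuous_on (cball 0 1) (\<lambda>w. g (of_real \<delta> + of_real (1 - \<delta>) * (c * w)))"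
        by (rule continuous_on_compose2[OF gc]) (use mapc[OF c] in \<open>auto intro!: continuous_intros\<close>)
      then show ?thesis unfolding F_def by (intro continuous_intros)
    qed
    have Hh: "H holomorphic_on ball 0 1" unfolding H_def
      by (rule holomorphic_on_prod) (rule Fh, simp)
    have Hc: "continuous_on (cball 0 1) H" unfolding H_def
      by (rule continuous_on_prod) (rule Fc, simp)
    have FB: "norm (F v) \<le> B" if "norm v \<le> 1" for v
      unfolding F_def B_def
      by (rule F_bound[of \<delta> "1 - \<delta>" "lam * M" g]) (use d L1 hyp that in auto)
    have Hs: "norm (H w) \<le> 4 * \<eta> * B ^ (n - 1)" if w: "w \<in> sphere 0 1" for w
    proof -
      have wn: "norm w = 1" using w by simp
      obtain k \<theta> where k: "k < n" and th: "\<bar>\<theta>\<bar> \<le> pi / n" and v: "cis (2 * pi * k / n) * w = cis \<theta>"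
        using arc_cover[of n w] n0 wn by auto
      have "pi / n \<le> a / 2"
      proof -
        have "2 * pi \<le> real n * a" using n1 a by (simp add: divide_le_eq)
        then show ?thesis using n0 by (simp add: divide_le_eq field_simps)
      qed
      also have "a / 2 \<le> a / (2 * (1 - \<delta>))" using a d by (intro divide_left_mono) auto
      finally have th2: "\<bar>\<theta>\<bar> \<le> a / (2 * (1 - \<delta>))" using th by linarith
      have inJ: "of_real \<delta> + of_real (1 - \<delta>) * cis \<theta> \<in> arcJ \<delta> a"
        unfolding arcJ_def using th2 by blast
      have Fk: "norm (F (cis (2 * pi * k / n) * w)) \<le> 4 * \<eta>"
      proof -
        have "norm (F (cis \<theta>)) = norm (g (of_real \<delta> + of_real (1 - \<delta>) * cis \<theta>)) * (norm (1 - cis \<theta>))^2"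
          unfolding F_def by (simp add: norm_mult norm_power)
        also have "\<dots> \<le> \<eta> * 2^2"
        proof (rule mult_mono)
          have "norm (1 - cis \<theta>) \<le> norm (1::complex) + norm (cis \<theta>)" by (rule norm_triangle_ineq4)
          then show "(norm (1 - cis \<theta>))^2 \<le> 2^2" by (intro power_mono) auto
        qed (use small[OF inJ] eta0 in auto)
        finally show ?thesis using v by simp
      qed
      have Bp: "B \<ge> 0" unfolding B_def using d L1 by simp
      have "norm (H w) = (\<Prod>j<n. norm (F (cis (2 * pi * j / n) * w)))" unfolding H_def by (simp add: prod_norm)
      also have "\<dots> = norm (F (cis (2 * pi * k / n) * w)) * (\<Prod>j\<in>{..<n} - {k}. norm (F (cis (2 * pi * j / n) * w)))"
        using k by (subst prod.remove[of "{..<n}" k]) auto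
      also have "\<dots> \<le> (4 * \<eta>) * (\<Prod>j\<in>{..<n} - {k}. B)"
      proof (rule mult_mono)
        show "(\<Prod>j\<in>{..<n} - {k}. norm (F (cis (2 * pi * j / n) * w))) \<le> (\<Prod>j\<in>{..<n} - {k}. B)"
          by (rule prod_mono) (auto intro!: FB simp: norm_mult wn)
      qed (use Fk Bp eta0 in \<open>auto intro: prod_nonneg\<close>)
      also have "(\<Prod>j\<in>{..<n} - {k}. B) = B ^ (n - 1)" using k by simp
      finally show ?thesis by simp
    qed
    have "norm (H 0) \<le> 4 * \<eta> * B ^ (n - 1)"
      by (rule maximum_modulus_frontier[of H "cball 0 1"]) (use Hh Hc Hs in auto)
    moreover have "norm (H 0) \<ge> 1"
    proof -
      have "H 0 = (g (of_real \<delta>)) ^ n" unfolding H_def F_def by simp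
      then show ?thesis using g0 by (simp add: norm_power one_le_power)
    qed
    moreover have "4 * \<eta> * B ^ (n - 1) < 1"
      unfolding \<eta>_def B_def by (rule final_arith) (use d a L1 n0 n2 in auto)
    ultimately show False by linarith
  qed
qed

end
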